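(* Let $k$ be a positive integer and let $H_k$ be the graph with half-edges obtained from the complete bipartite graph $K_{k,k}$ by deleting one vertex but keeping its $k$ incident edges as half-edges (each attached only at its other end vertex). Then $H_k$ is type 1, i.e. it admits a $(k+1)$-total colouring. Moreover, in every $(k+1)$-total colouring of $H_k$, all $k$ half-edges receive the same colour.
   Context: Graphs may contain half-edges: a half-edge has exactly one end vertex. A $(k+1)$-total colouring of such a graph assigns to each vertex, each edge and each half-edge one of $k+1$ colours so that no two adjacent vertices, no two edges/half-edges sharing an end vertex, and no vertex together with an edge or half-edge incident with it receive the same colour. The maximum degree of $H_k$ (counting half-edges) is $k$, and "type 1" means it has a total colouring with maximum degree $+1$ colours. *)

theory Defs
  imports Main
begin

text \<open>A graph with half-edges is given by a vertex set V, a set E of (ordinary)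
edges, each a 2-element set of vertices, a set Hf of half-edges, and a map
hend assigning to each half-edge its unique end vertex.\<close>

definition total_colouring ::
  "'v set \<Rightarrow> 'v set set \<Rightarrow> 'h set \<Rightarrow> ('h \<Rightarrow> 'v) \<Rightarrow> nat \<Rightarrow>
   ('v \<Rightarrow> nat) \<Rightarrow> ('v set \<Rightarrow> nat) \<Rightarrow> ('h \<Rightarrow> nat) \<Rightarrow> bool" where
  "total_colouring V E Hf hend n cv ce ch \<longleftrightarrow>
     (\<forall>v\<in>V. cv v < n) \<and> (\<forall>e\<in>E. ce e < n) \<and> (\<forall>h\<in>Hf. ch h < n) \<and>
     \<comment> \<open>adjacent vertices\<close>
     (\<forall>u\<in>V. \<forall>v\<in>V. {u, v} \<in> E \<longrightarrow> cv u \<noteq> cv v) \<and>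
     \<comment> \<open>two distinct edges sharing an end vertex\<close>
     (\<forall>e\<in>E. \<forall>e'\<in>E. e \<noteq> e' \<and> e \<inter> e' \<noteq> {} \<longrightarrow> ce e \<noteq> ce e') \<and>
     \<comment> \<open>an edge and a half-edge sharing an end vertex\<close>
     (\<forall>e\<in>E. \<forall>h\<in>Hf. hend h \<in> e \<longrightarrow> ce e \<noteq> ch h) \<and>
     \<comment> \<open>two distinct half-edges sharing an end vertex\<close>
     (\<forall>h\<in>Hf. \<forall>h'\<in>Hf. h \<noteq> h' \<and> hend h = hend h' \<longrightarrow> ch h \<noteq> ch h') \<and>
     \<comment> \<open>a vertex and an incident edge\<close>
     (\<forall>v\<in>V. \<forall>e\<in>E. v \<in> e \<longrightarrow> cv v \<noteq> ce e) \<and>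
     \<comment> \<open>a vertex and an incident half-edge\<close>
     (\<forall>v\<in>V. \<forall>h\<in>Hf. hend h = v \<longrightarrow> cv v \<noteq> ch h)"

text \<open>H_k: start from K_{k,k} with sides Inl 0..k-1 and Inr 0..k-1, delete
the vertex Inr (k-1) and keep its k incident edges as half-edges; half-edge i
(for i < k) has end vertex Inl i.\<close>

definition Hk_V :: "nat \<Rightarrow> (nat + nat) set" where
  "Hk_V k = Inl ` {..<k} \<union> Inr ` {..<k-1}"

definition Hk_E :: "nat \<Rightarrow> (nat + nat) set set" where
  "Hk_E k = {{Inl i, Inr j} | i j. i < k \<and> j < k - 1}"

definition Hk_H :: "nat \<Rightarrow> nat set" where
  "Hk_H k = {..<k}"

definition Hk_end :: "nat \<Rightarrow> nat + nat" where
  "Hk_end i = Inl i"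

end

theory Submission
  imports Defs
begin

lemma modcanc0: "(x + d) mod k = x mod (k::nat) \<Longrightarrow> d < k \<Longrightarrow> d = 0"
proof -
  assume h: "(x + d) mod k = x mod (k::nat)" "d < k"
  have "k dvd (x + d) - x" using h(1) mod_eq_dvd_iff_nat[of x "x+d" k] by simp
  then have "k dvd d" by simp
  with h(2) show "d = 0" using dvd_imp_le by (cases "d = 0") auto
qed
lemma modcanc: "(i + a) mod k = (i + b) mod (k::nat) \<Longrightarrow> a < k \<Longrightarrow> b < k \<Longrightarrow> a = b"
proof (cases "a \<le> b")
  case True
  assume h: "(i + a) mod k = (i + b) mod (k::nat)" "a < k" "b < k"
  have "b - a = 0" using modcanc0[of "i+a" "b-a" k] h True by simp
  then show ?thesis using True by simp
next
  case False
  assume h: "(i + a) mod k = (i + b) mod (k::nat)" "a < k" "b < k"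
  have "a - b = 0" by (rule modcanc0[of "i+b" "a-b" k]) (use h False in simp_all)
  then show ?thesis using False by simp
qed

lemma existence:
  fixes k :: nat
  assumes "k > 0"
  shows "\<exists>cv ce ch. total_colouring (Hk_V k) (Hk_E k) (Hk_H k) Hk_end (k + 1) cv ce ch"
proof -
  define cv :: "nat + nat \<Rightarrow> nat" where "cv v = (case v of Inl i \<Rightarrow> 1 + (i + (k-1)) mod k | Inr _ \<Rightarrow> 0)" for v
  define ce :: "(nat + nat) set \<Rightarrow> nat" where "ce e = 1 + (\<Sum>x\<in>e. case x of Inl i \<Rightarrow> i | Inr j \<Rightarrow> j) mod k" for e
  define ch :: "nat \<Rightarrow> nat" where "ch h = 0" for h
  have ceE: "ce {Inl i, Inr j} = 1 + (i + j) mod k" for i j by (simp add: ce_def)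
  have mk: "x mod k < k" for x using assms by simp
  have "total_colouring (Hk_V k) (Hk_E k) (Hk_H k) Hk_end (k + 1) cv ce ch"
    unfolding total_colouring_def
  proof (intro conjI)
    show "\<forall>v\<in>Hk_V k. cv v < k + 1" using mk by (auto simp: Hk_V_def cv_def)
    show "\<forall>e\<in>Hk_E k. ce e < k + 1" using mk by (auto simp: Hk_E_def ceE)
    show "\<forall>h\<in>Hk_H k. ch h < k + 1" by (simp add: ch_def)
    show "\<forall>u\<in>Hk_V k. \<forall>v\<in>Hk_V k. {u, v} \<in> Hk_E k \<longrightarrow> cv u \<noteq> cv v"
      by (auto simp: Hk_V_def Hk_E_def cv_def doubleton_eq_iff)
    show "\<forall>e\<in>Hk_E k. \<forall>e'\<in>Hk_E k. e \<noteq> e' \<and> e \<inter> e' \<noteq> {} \<longrightarrow> ce e \<noteq> ce e'"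
    proof (intro ballI impI)
      fix e e' assume e: "e \<in> Hk_E k" and e': "e' \<in> Hk_E k" and ne: "e \<noteq> e' \<and> e \<inter> e' \<noteq> {}"
      obtain i j where ij: "e = {Inl i, Inr j}" "i < k" "j < k - 1" using e by (auto simp: Hk_E_def)
      obtain i' j' where ij': "e' = {Inl i', Inr j'}" "i' < k" "j' < k - 1" using e' by (auto simp: Hk_E_def)
      have lt: "j < k" "j' < k" using ij ij' by auto
      have "i = i' \<and> j \<noteq> j' \<or> j = j' \<and> i \<noteq> i'" using ne ij ij' by auto
      then show "ce e \<noteq> ce e'"
      proof
        assume a: "i = i' \<and> j \<noteq> j'"
        show ?thesis using modcanc[of i j k j'] a ij ij' lt by (auto simp: ceE)
      next
        assume a: "j = j' \<and> i \<noteq> i'"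
        show ?thesis using modcanc[of j i k i'] a ij ij' by (auto simp: ceE add.commute)
      qed
    qed
    show "\<forall>e\<in>Hk_E k. \<forall>h\<in>Hk_H k. Hk_end h \<in> e \<longrightarrow> ce e \<noteq> ch h"
      by (auto simp: Hk_E_def ceE ch_def)
    show "\<forall>h\<in>Hk_H k. \<forall>h'\<in>Hk_H k. h \<noteq> h' \<and> Hk_end h = Hk_end h' \<longrightarrow> ch h \<noteq> ch h'"
      by (auto simp: Hk_end_def)
    show "\<forall>v\<in>Hk_V k. \<forall>e\<in>Hk_E k. v \<in> e \<longrightarrow> cv v \<noteq> ce e"
    proof (intro ballI impI)
      fix v e assume v: "v \<in> Hk_V k" and e: "e \<in> Hk_E k" and ve: "v \<in> e"
      obtain i j where ij: "e = {Inl i, Inr j}" "i < k" "j < k - 1" using e by (auto simp: Hk_E_def)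
      show "cv v \<noteq> ce e"
      proof (cases "v = Inl i")
        case True
        have "j \<noteq> k - 1" "j < k" using ij by auto
        then show ?thesis using True ij modcanc[of i j k "k-1"] assms by (auto simp: cv_def ceE)
      next
        case False
        then show ?thesis using ve ij by (auto simp: cv_def ceE)
      qed
    qed
    show "\<forall>v\<in>Hk_V k. \<forall>h\<in>Hk_H k. Hk_end h = v \<longrightarrow> cv v \<noteq> ch h"
      by (auto simp: cv_def ch_def Hk_end_def)
  qed
  then show ?thesis by blast
qed

lemma one_hit:
  fixes f :: "nat \<Rightarrow> nat"
  assumes inj: "inj_on f {..<n}" and sub: "f ` {..<n} \<subseteq> {..<n}" and c: "c < n"
  shows "(\<Sum>t<n. if f t = c then 1 else 0) = (1::nat)"
proof -
  have "f ` {..<n} = {..<n}" using endo_inj_surj[OF _ sub inj] by simp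
  with c obtain t0 where t0: "t0 < n" "f t0 = c" by (metis imageE lessThan_iff)
  have "(\<Sum>t<n. if f t = c then 1 else 0) = (\<Sum>t<n. if t = t0 then 1 else (0::nat))"
    apply (rule sum.cong, simp)
    using inj t0 by (auto simp: inj_on_def)
  also have "\<dots> = 1" using t0 by simp
  finally show ?thesis .
qed

lemma uniqueness:
  fixes k :: nat
  assumes kpos: "k > 0"
    and tc: "total_colouring (Hk_V k) (Hk_E k) (Hk_H k) Hk_end (k + 1) cv ce ch"
    and hh: "h \<in> Hk_H k" "h' \<in> Hk_H k"
  shows "ch h = ch h'"
proof -
  define E where "E i j = ce {Inl i, Inr j}" for i j
  have memV1: "Inl i \<in> Hk_V k" if "i < k" for i using that by (simp add: Hk_V_def)
  have memV2: "Inr j \<in> Hk_V k" if "j < k - 1" for j using that by (simp add: Hk_V_def)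
  have memE: "{Inl i, Inr j} \<in> Hk_E k" if "i < k" "j < k - 1" for i j
    using that by (auto simp: Hk_E_def)
  have memH: "i \<in> Hk_H k" if "i < k" for i using that by (simp add: Hk_H_def)
  note tcd = tc[unfolded total_colouring_def]
  note t1 = tcd[THEN conjunct1]
  note r1 = tcd[THEN conjunct2]
  note t2 = r1[THEN conjunct1]
  note r2 = r1[THEN conjunct2]
  note t3 = r2[THEN conjunct1]
  note r3 = r2[THEN conjunct2]
  note t4 = r3[THEN conjunct1]
  note r4 = r3[THEN conjunct2]
  note t5 = r4[THEN conjunct1]
  note r5 = r4[THEN conjunct2]
  note t6 = r5[THEN conjunct1]
  note r6 = r5[THEN conjunct2]
  note t7 = r6[THEN conjunct1]
  note r7 = r6[THEN conjunct2]
  note t8 = r7[THEN conjunct1]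
  note t9 = r7[THEN conjunct2]
  have F1a: "E i j < k + 1" if "i < k" "j < k - 1" for i j
    using t2 memE[OF that] by (auto simp: E_def)
  have F1b: "cv (Inl i) < k + 1" if "i < k" for i using t1 memV1[OF that] by auto
  have F1c: "cv (Inr j) < k + 1" if "j < k - 1" for j using t1 memV2[OF that] by auto
  have F1d: "ch i < k + 1" if "i < k" for i using t3 memH[OF that] by auto
  have F2: "cv (Inl i) \<noteq> cv (Inr j)" if "i < k" "j < k - 1" for i j
    using t4[rule_format, OF memV1[OF that(1)] memV2[OF that(2)] memE[OF that]] .
  have F3: "E i j \<noteq> E i j'" if "i < k" "j < k - 1" "j' < k - 1" "j \<noteq> j'" for i j j'
  proof -
    have "{Inl i, Inr j} \<noteq> {Inl i, Inr j'}" using that by (auto simp: doubleton_eq_iff)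
    moreover have "{Inl i, Inr j} \<inter> {Inl i, Inr j'} \<noteq> {}" by auto
    ultimately show ?thesis using t5[rule_format, OF memE[OF that(1,2)] memE[OF that(1,3)]] unfolding E_def by blast
  qed
  have F4: "E i j \<noteq> E i' j" if "i < k" "i' < k" "j < k - 1" "i \<noteq> i'" for i i' j
  proof -
    have "{Inl i, Inr j} \<noteq> {Inl i', Inr j}" using that by (auto simp: doubleton_eq_iff)
    moreover have "{Inl i, Inr j} \<inter> {Inl i', Inr j} \<noteq> {}" by auto
    ultimately show ?thesis using t5[rule_format, OF memE[OF that(1,3)] memE[OF that(2,3)]] unfolding E_def by blast
  qed
  have F5: "E i j \<noteq> ch i" if "i < k" "j < k - 1" for i j
    using t6[rule_format, OF memE[OF that] memH[OF that(1)]] unfolding E_def Hk_end_def by simp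
  have F6: "cv (Inl i) \<noteq> E i j" if "i < k" "j < k - 1" for i j
    using t8[rule_format, OF memV1[OF that(1)] memE[OF that]] unfolding E_def by simp
  have F7: "cv (Inr j) \<noteq> E i j" if "i < k" "j < k - 1" for i j
    using t8[rule_format, OF memV2[OF that(2)] memE[OF that]] unfolding E_def by simp
  have F8: "cv (Inl i) \<noteq> ch i" if "i < k" for i
    using t9[rule_format, OF memV1[OF that] memH[OF that]] unfolding Hk_end_def by simp

  define R where "R i c = (\<Sum>j<k-1. if E i j = c then 1 else (0::nat))" for i c
  define X where "X i c = (if cv (Inl i) = c then 1 else (0::nat))" for i c
  define N where "N i c = (if ch i = c then 1 else (0::nat))" for i c
  define C where "C j c = (\<Sum>i<k. if E i j = c then 1 else (0::nat))" for j c
  define Y where "Y j c = (if cv (Inr j) = c then 1 else (0::nat))" for j c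

  have row: "R i c + X i c + N i c = 1" if i: "i < k" and c: "c < k + 1" for i c
  proof -
    define f where "f t = (if t < k - 1 then E i t else if t = k - 1 then cv (Inl i) else ch i)" for t
    have fs: "f k = ch i" "f (k-1) = cv (Inl i)" "f (k - Suc 0) = cv (Inl i)" "\<And>t. t < k - 1 \<Longrightarrow> f t = E i t"
      using kpos by (auto simp: f_def)
    have inj: "inj_on f {..<k+1}"
    proof (rule inj_onI)
      fix t t' assume t: "t \<in> {..<k+1}" and t': "t' \<in> {..<k+1}" and eq: "f t = f t'"
      show "t = t'"
      proof (rule ccontr)
        assume ne: "t \<noteq> t'"
        consider "t < k - 1" | "t = k - 1" | "t = k" using t by force
        then show False
        proof cases
          case 1
          consider "t' < k - 1" | "t' = k - 1" | "t' = k" using t' by force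
          then show False
            by cases (use 1 eq ne i kpos F3[OF i 1] F6[OF i 1] F5[OF i 1] in \<open>auto simp: fs\<close>)
        next
          case 2
          consider "t' < k - 1" | "t' = k - 1" | "t' = k" using t' by force
          then show False
            by cases (use 2 eq ne i kpos F6[OF i] F8[OF i] in \<open>auto simp: fs\<close>)
        next
          case 3
          consider "t' < k - 1" | "t' = k - 1" | "t' = k" using t' by force
          then show False
            by cases (use 3 eq ne i kpos F5[OF i] F8[OF i] in \<open>auto simp: fs\<close>)
        qed
      qed
    qed
    have sub: "f ` {..<k+1} \<subseteq> {..<k+1}"
      using F1a[OF i] F1b[OF i] F1d[OF i] by (auto simp: f_def)
    have "(\<Sum>t<k+1. if f t = c then 1 else 0) = (1::nat)" by (rule one_hit[OF inj sub]) (use c in simp)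
    moreover have "k + 1 = Suc (Suc (k - 1))" using kpos by simp
    ultimately have "(\<Sum>t<Suc (Suc (k-1)). if f t = c then 1 else 0) = (1::nat)" by simp
    moreover have "(\<Sum>t<Suc (Suc (k-1)). if f t = c then 1 else (0::nat)) =
       (\<Sum>t<k-1. if f t = c then 1 else 0) + (if f (k-1) = c then 1 else 0) + (if f (Suc (k-1)) = c then 1 else 0)"
      by (simp only: sum.lessThan_Suc)
    moreover have "Suc (k - 1) = k" using kpos by simp
    ultimately have "(\<Sum>t<k-1. if f t = c then 1 else 0) + X i c + N i c = (1::nat)"
      by (simp add: fs X_def N_def)
    moreover have "(\<Sum>t<k-1. if f t = c then 1 else 0) = R i c"
      unfolding R_def by (rule sum.cong) (auto simp: f_def)
    ultimately show ?thesis by simp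
  qed
  have col: "C j c + Y j c = 1" if j: "j < k - 1" and c: "c < k + 1" for j c
  proof -
    define f where "f t = (if t < k then E t j else cv (Inr j))" for t
    have inj: "inj_on f {..<k+1}"
    proof (rule inj_onI)
      fix t t' assume t: "t \<in> {..<k+1}" and t': "t' \<in> {..<k+1}" and eq: "f t = f t'"
      show "t = t'"
      proof (rule ccontr)
        assume ne: "t \<noteq> t'"
        consider "t < k" | "t = k" using t by force
        then show False
        proof cases
          case 1
          consider "t' < k" | "t' = k" using t' by force
          then show False
            by cases (use 1 eq ne j F4[OF 1 _ j] F7[OF 1 j] in \<open>auto simp: f_def\<close>)
        next
          case 2
          consider "t' < k" | "t' = k" using t' by force
          then show False
            by cases (use 2 eq ne j F7[OF _ j] in \<open>auto simp: f_def\<close>)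
        qed
      qed
    qed
    have sub: "f ` {..<k+1} \<subseteq> {..<k+1}"
      using F1a[OF _ j] F1c[OF j] by (auto simp: f_def)
    have "(\<Sum>t<k+1. if f t = c then 1 else 0) = (1::nat)" by (rule one_hit[OF inj sub]) (use c in simp)
    then have "(\<Sum>t<k. if f t = c then 1 else 0) + Y j c = (1::nat)"
      by (simp add: f_def Y_def)
    moreover have "(\<Sum>t<k. if f t = c then 1 else 0) = C j c"
      unfolding C_def by (rule sum.cong) (auto simp: f_def)
    ultimately show ?thesis by simp
  qed
  define x where "x c = (\<Sum>i<k. X i c)" for c
  define n where "n c = (\<Sum>i<k. N i c)" for c
  define y where "y c = (\<Sum>j<k-1. Y j c)" for c
  have xny: "x c + n c = y c + 1" if c: "c < k + 1" for c
  proof -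
    have S: "(\<Sum>i<k. R i c) = (\<Sum>j<k-1. C j c)"
      unfolding R_def C_def by (rule sum.swap)
    have "(\<Sum>i<k. R i c + X i c + N i c) = (\<Sum>i<k. 1::nat)"
      by (rule sum.cong) (use row c in auto)
    then have a: "(\<Sum>i<k. R i c) + x c + n c = k" by (simp add: sum.distrib x_def n_def)
    have "(\<Sum>j<k-1. C j c + Y j c) = (\<Sum>j<k-1. 1::nat)"
      by (rule sum.cong) (use col c in auto)
    then have b: "(\<Sum>j<k-1. C j c) + y c = k - 1" by (simp add: sum.distrib y_def)
    show ?thesis using a b S kpos by linarith
  qed
  have x0: "x c = 0" if "y c \<noteq> 0" for c
  proof -
    have "(\<Sum>j<k-1. Y j c) \<noteq> 0" using that unfolding y_def .
    then obtain j where j0: "j \<in> {..<k-1}" "Y j c \<noteq> 0"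
      by (rule sum.not_neutral_contains_not_neutral)
    then have j: "j < k - 1" "Y j c \<noteq> 0" by auto
    have "cv (Inr j) = c" using j by (simp add: Y_def split: if_splits)
    have "X i c = 0" if "i < k" for i using F2[OF that j(1)] \<open>cv (Inr j) = c\<close> by (simp add: X_def)
    then show ?thesis unfolding x_def by simp
  qed
  define z where "z c = (if y c = 0 then 0 else (1::nat))" for c
  have nge: "y c + z c \<le> n c" if "c < k + 1" for c
    using xny[OF that] x0[of c] by (cases "y c = 0") (auto simp: z_def)
  have d1: "(\<Sum>c<k+1. N i c) = 1" if "i < k" for i
  proof -
    have "(\<Sum>c<k+1. N i c) = (\<Sum>c\<in>{..<k+1}. if ch i = c then 1 else 0)" by (simp only: N_def)
    also have "\<dots> = (if ch i \<in> {..<k+1} then 1 else 0)" by (rule sum.delta'[OF finite_lessThan])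
    also have "\<dots> = 1" using F1d[OF that] by simp
    finally show ?thesis .
  qed
  have d2: "(\<Sum>c<k+1. Y j c) = 1" if "j < k - 1" for j
  proof -
    have "(\<Sum>c<k+1. Y j c) = (\<Sum>c\<in>{..<k+1}. if cv (Inr j) = c then 1 else 0)" by (simp only: Y_def)
    also have "\<dots> = (if cv (Inr j) \<in> {..<k+1} then 1 else 0)" by (rule sum.delta'[OF finite_lessThan])
    also have "\<dots> = 1" using F1c[OF that] by simp
    finally show ?thesis .
  qed
  have nsum: "(\<Sum>c<k+1. n c) = k"
  proof -
    have "(\<Sum>c<k+1. n c) = (\<Sum>i<k. \<Sum>c<k+1. N i c)" unfolding n_def by (rule sum.swap)
    also have "\<dots> = (\<Sum>i<k. 1)"
      by (rule sum.cong) (use d1 in simp_all)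
    finally show ?thesis by simp
  qed
  have ysum: "(\<Sum>c<k+1. y c) = k - 1"
  proof -
    have "(\<Sum>c<k+1. y c) = (\<Sum>j<k-1. \<Sum>c<k+1. Y j c)" unfolding y_def by (rule sum.swap)
    also have "\<dots> = (\<Sum>j<k-1. 1)"
      by (rule sum.cong) (use d2 in simp_all)
    finally show ?thesis by simp
  qed
  have "(\<Sum>c<k+1. y c + z c) \<le> (\<Sum>c<k+1. n c)" by (rule sum_mono) (use nge in auto)
  then have zsum: "(\<Sum>c<k+1. z c) \<le> 1" using nsum ysum by (simp add: sum.distrib)
  show ?thesis
  proof (cases "k = 1")
    case True then show ?thesis using hh by (simp add: Hk_H_def)
  next
    case False
    then have k2: "0 < k - 1" using kpos by simp
    define c0 where "c0 = cv (Inr 0)"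
    have c0k: "c0 < k + 1" using F1c[OF k2] by (simp add: c0_def)
    have "Y 0 c0 \<le> y c0" unfolding y_def by (rule member_le_sum) (use k2 in auto)
    then have yc0: "y c0 \<noteq> 0" by (simp add: Y_def c0_def)
    have yoth: "y c = 0" if "c < k + 1" "c \<noteq> c0" for c
    proof (rule ccontr)
      assume "y c \<noteq> 0"
      then have "(\<Sum>c\<in>{c, c0}. z c) = 2" using yc0 that by (simp add: z_def)
      moreover have "(\<Sum>c\<in>{c, c0}. z c) \<le> (\<Sum>c<k+1. z c)"
        by (rule sum_mono2) (use that c0k in auto)
      ultimately show False using zsum by simp
    qed
    have "(\<Sum>c<k+1. y c) = (\<Sum>c<k+1. if c = c0 then y c0 else 0)"
      by (rule sum.cong) (use yoth in auto)
    also have "\<dots> = (if c0 \<in> {..<k+1} then y c0 else 0)" by (rule sum.delta[OF finite_lessThan])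
    also have "\<dots> = y c0" using c0k by simp
    finally have "y c0 = k - 1" using ysum by simp
    then have nc0: "k \<le> n c0" using nge[OF c0k] yc0 kpos by (simp add: z_def)
    have chc0: "ch i = c0" if "i < k" for i
    proof (rule ccontr)
      assume ne: "ch i \<noteq> c0"
      define d where "d = ch i"
      have dk: "d < k + 1" using F1d[OF that] by (simp add: d_def)
      have "N i d \<le> n d" unfolding n_def by (rule member_le_sum) (use that in auto)
      then have "1 \<le> n d" by (simp add: N_def d_def)
      moreover have "(\<Sum>c\<in>{c0, d}. n c) \<le> (\<Sum>c<k+1. n c)"
        by (rule sum_mono2) (use dk c0k in auto)
      ultimately show False using nc0 nsum ne by (simp add: d_def)
    qed
    show ?thesis using chc0 hh by (simp add: Hk_H_def)
  qed
qed

theorem lemma2: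
  fixes k :: nat
  assumes "k > 0"
  shows "(\<exists>cv ce ch. total_colouring (Hk_V k) (Hk_E k) (Hk_H k) Hk_end (k + 1) cv ce ch) \<and>
         (\<forall>cv ce ch. total_colouring (Hk_V k) (Hk_E k) (Hk_H k) Hk_end (k + 1) cv ce ch \<longrightarrow>
            (\<forall>h\<in>Hk_H k. \<forall>h'\<in>Hk_H k. ch h = ch h'))"
  using existence[OF assms] uniqueness[OF assms] by blast

end
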